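(* Let $(M,A)$ be a $d$-dimensional BUT-manifold. Then $M$ cannot be covered by $d+1$ closed sets none of which contains a pair $(x,A(x))$ of antipodal points.
   Context: A BUT (Borsuk–Ulam type) manifold is a pair $(M,A)$ where $M$ is a connected compact piecewise-linear $d$-dimensional manifold without boundary and $A:M\to M$ is a free simplicial involution ($A(A(x))=x$, $A(x)\neq x$), such that for every continuous $g:M\to\mathbb{R}^d$ there is $x\in M$ with $g(A(x))=g(x)$. *)

theory Defs
  imports "HOL-Analysis.Analysis"
begin

definition free_involution :: "'a set \<Rightarrow> ('a \<Rightarrow> 'a) \<Rightarrow> bool" where
  "free_involution M A \<longleftrightarrow> (\<forall>x\<in>M. A x \<in> M \<and> A (A x) = x \<and> A x \<noteq> x)"

definition simplicial_map_on :: "'a::euclidean_space set set \<Rightarrow> ('a \<Rightarrow> 'a) \<Rightarrow> bool" where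
  "simplicial_map_on \<T> A \<longleftrightarrow>
     (\<forall>T\<in>\<T>. A ` T \<in> \<T> \<and>
        (\<forall>x\<in>T. \<forall>y\<in>T. \<forall>u::real. 0 \<le> u \<and> u \<le> 1 \<longrightarrow>
            A ((1 - u) *\<^sub>R x + u *\<^sub>R y) = (1 - u) *\<^sub>R A x + u *\<^sub>R A y))"

text \<open>Closed (compact) d-manifold without boundary: every point has an open
  neighbourhood homeomorphic to an open d-ball (of some d-dimensional linear subspace,
  i.e. a copy of R^d).\<close>
definition closed_manifold :: "nat \<Rightarrow> 'a::euclidean_space set \<Rightarrow> bool" where
  "closed_manifold d M \<longleftrightarrow> compact M \<and>
     (\<forall>x\<in>M. \<exists>U (S::'a set). openin (top_of_set M) U \<and> x \<in> U \<and> subspace S \<and> dim S = d \<and>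
                    U homeomorphic (ball 0 1 \<inter> S))"

text \<open>Borsuk-Ulam property: every continuous map from M to R^d (realised as any
  d-dimensional linear subspace S of the ambient space) identifies some pair x, A x.\<close>
definition BU_property :: "nat \<Rightarrow> 'a::euclidean_space set \<Rightarrow> ('a \<Rightarrow> 'a) \<Rightarrow> bool" where
  "BU_property d M A \<longleftrightarrow>
     (\<forall>S (g::'a \<Rightarrow> 'a). subspace S \<and> dim S = d \<and> continuous_on M g \<and> g ` M \<subseteq> S
        \<longrightarrow> (\<exists>x\<in>M. g (A x) = g x))"

definition BUT_manifold :: "nat \<Rightarrow> 'a::euclidean_space set \<Rightarrow> ('a \<Rightarrow> 'a) \<Rightarrow> bool" where
  "BUT_manifold d M A \<longleftrightarrow>
     M \<noteq> {} \<and> connected M \<and> closed_manifold d M \<and>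
     (\<exists>\<T>. triangulation \<T> \<and> \<Union>\<T> = M \<and> simplicial_map_on \<T> A) \<and>
     free_involution M A \<and> BU_property d M A"

end

theory Submission
  imports Defs
begin

lemma coeff_extract:
  fixes b :: "nat \<Rightarrow> 'a::euclidean_space"
  assumes inj: "inj_on b {1..d}" and orth: "pairwise orthogonal (b ` {1..d})"
    and nrm: "\<And>i. i \<in> {1..d} \<Longrightarrow> norm (b i) = 1" and j: "j \<in> {1..d}"
  shows "(\<Sum>i\<in>{1..d}. c i *\<^sub>R b i) \<bullet> b j = c j"
proof -
  have "(\<Sum>i\<in>{1..d}. c i *\<^sub>R b i) \<bullet> b j = (\<Sum>i\<in>{1..d}. c i * (b i \<bullet> b j))"
    by (simp add: inner_sum_left)
  also have "\<dots> = c j * (b j \<bullet> b j) + (\<Sum>i\<in>{1..d} - {j}. c i * (b i \<bullet> b j))"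
    using j by (simp add: sum.remove)
  also have "(\<Sum>i\<in>{1..d} - {j}. c i * (b i \<bullet> b j)) = 0"
  proof (rule sum.neutral, rule ballI)
    fix i assume "i \<in> {1..d} - {j}"
    then have i: "i \<in> {1..d}" "i \<noteq> j" by auto
    then have "b i \<noteq> b j" using inj j by (meson inj_onD)
    then have "orthogonal (b i) (b j)" using orth i j
      by (simp add: pairwise_def)
    then show "c i * (b i \<bullet> b j) = 0" by (simp add: orthogonal_def)
  qed
  also have "b j \<bullet> b j = 1" using nrm[OF j] by (simp add: norm_eq_1)
  finally show ?thesis by simp
qed

theorem mainTheorem8:
  fixes M :: "'a::euclidean_space set" and A :: "'a \<Rightarrow> 'a" and d :: nat
  assumes "BUT_manifold d M A"
  shows "\<not> (\<exists>F :: nat \<Rightarrow> 'a set.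
              (\<forall>i\<le>d. closedin (top_of_set M) (F i)) \<and>
              M \<subseteq> (\<Union>i\<le>d. F i) \<and>
              (\<forall>i\<le>d. \<forall>x\<in>M. \<not> (x \<in> F i \<and> A x \<in> F i)))"
proof
  assume "\<exists>F :: nat \<Rightarrow> 'a set.
              (\<forall>i\<le>d. closedin (top_of_set M) (F i)) \<and>
              M \<subseteq> (\<Union>i\<le>d. F i) \<and>
              (\<forall>i\<le>d. \<forall>x\<in>M. \<not> (x \<in> F i \<and> A x \<in> F i))"
  then obtain F :: "nat \<Rightarrow> 'a set" where cl: "\<forall>i\<le>d. closedin (top_of_set M) (F i)"
    and cov: "M \<subseteq> (\<Union>i\<le>d. F i)" and na: "\<forall>i\<le>d. \<forall>x\<in>M. \<not> (x \<in> F i \<and> A x \<in> F i)"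
    by blast
  have ne: "M \<noteq> {}" and cm: "closed_manifold d M" and fi: "free_involution M A"
    and bu: "BU_property d M A"
    using assms by (auto simp: BUT_manifold_def)
  obtain x0 where "x0 \<in> M" using ne by blast
  then obtain S :: "'a set" where S: "subspace S" "dim S = d"
    using cm unfolding closed_manifold_def by blast
  obtain B where B: "B \<subseteq> S" "pairwise orthogonal B" "\<And>x. x \<in> B \<Longrightarrow> norm x = 1"
    "independent B" "card B = dim S" "span B = S"
    using orthonormal_basis_subspace[OF S(1)] by blast
  have finB: "finite B" using B(4) by (simp add: independent_imp_finite)
  obtain b where bb: "bij_betw b {1..d} B"
    using ex_bij_betw_nat_finite_1[OF finB] B(5) S(2) by auto
  have binj: "inj_on b {1..d}" and bimg: "b ` {1..d} = B"
    using bb by (auto simp: bij_betw_def)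
  define g where "g = (\<lambda>x. \<Sum>i\<in>{1..d}. setdist {x} (F i) *\<^sub>R b i)"
  have "continuous_on M g" unfolding g_def
    by (intro continuous_intros)
  moreover have "g ` M \<subseteq> S"
  proof
    fix y assume "y \<in> g ` M"
    then obtain x where "y = g x" by blast
    have "b i \<in> S" if "i \<in> {1..d}" for i using bimg B(1) that by blast
    then show "y \<in> S" unfolding \<open>y = g x\<close> g_def
      by (intro subspace_sum[OF S(1)] subspace_mul[OF S(1)]) auto
  qed
  ultimately obtain x where x: "x \<in> M" "g (A x) = g x"
    using bu S unfolding BU_property_def by blast
  have Ax: "A x \<in> M" using fi x(1) by (simp add: free_involution_def)
  have eq: "setdist {A x} (F j) = setdist {x} (F j)" if j: "j \<in> {1..d}" for j
  proof -
    have orth: "pairwise orthogonal (b ` {1..d})" using bimg B(2) by simp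
    have n: "\<And>i. i \<in> {1..d} \<Longrightarrow> norm (b i) = 1" using bimg B(3) by blast
    have "g (A x) \<bullet> b j = g x \<bullet> b j" using x(2) by simp
    then show ?thesis unfolding g_def
      using coeff_extract[OF binj orth n j] by simp
  qed
  have notin: "y \<notin> F j" if "y \<in> {x, A x}" "j \<in> {1..d}" for y j
  proof
    assume yF: "y \<in> F j"
    have jd: "j \<le> d" using that(2) by simp
    have c: "closedin (top_of_set M) (F j)" using cl jd by blast
    have ne: "F j \<noteq> {}" using yF by blast
    have "setdist {y} (F j) = 0" using setdist_eq_0_closedin[OF c] yF c closedin_subset by fastforce
    then have "setdist {x} (F j) = 0 \<and> setdist {A x} (F j) = 0"
      using that(1) eq[OF that(2)] by auto
    then have "x \<in> F j \<and> A x \<in> F j"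
      using setdist_eq_0_closedin[OF c] x(1) Ax yF by blast
    then show False using na jd x(1) by blast
  qed
  have inF0: "y \<in> F 0" if "y \<in> {x, A x}" for y
  proof -
    have "y \<in> M" using that x(1) Ax by auto
    then obtain i where i: "i \<le> d" "y \<in> F i" using cov by blast
    show ?thesis
    proof (cases "i = 0")
      case False then have "i \<in> {1..d}" using i by auto
      then show ?thesis using notin[OF that] i by blast
    qed (use i in simp)
  qed
  have "x \<in> F 0" using inF0 by simp
  moreover have "A x \<in> F 0" using inF0 by simp
  ultimately show False using na x(1) by blast
qed

end
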